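(* Consider Model 2 (the risk-neutral insider model) with $N\ge1$ trading periods, as described in the context. A subgame perfect equilibrium exists. In this equilibrium there are real numbers $\beta_n,\lambda_n,\alpha_n,\delta_n,\Sigma_n$ such that for $n=1,\dots,N$: $x_n=\beta_n(v-p_{n-1})$, $p_n-p_{n-1}=\lambda_n y_n$, $\Sigma_n=\operatorname{Var}(v\mid y_1,\dots,y_n)$, and $$E\Big(\sum_{k=n}^N\pi_k\,\Big|\,p_1,\dots,p_{n-1},v\Big)=\alpha_{n-1}(v-p_{n-1})^2+\delta_{n-1},$$ where $$\delta_n=a_n\sigma_u\Delta t_N^{1/2}\Sigma_n^{1/2},\quad \alpha_n=b_n\sigma_u\Delta t_N^{1/2}\Sigma_n^{-1/2}\quad(n=0,\dots,N-1),\qquad \beta_n=c_n\sigma_u\Delta t_N^{1/2}\Sigma_{n-1}^{-1/2}\quad(n=1,\dots,N),$$ and the sequences $\{a_n\},\{b_n\},\{c_n\}$, with terminal values $a_{N-1}=0$, $b_{N-1}=\tfrac12$, $c_N=1$, satisfy for $n=1,\dots,N-1$ $$a_{n-1}=a_n\Big(\frac{1}{c_n^2+1}\Big)^{1/2}+b_n\Big(\frac{1}{c_n^2+1}\Big)^{3/2}c_n^2,\qquad b_{n-1}=b_n\Big(\frac{1}{c_n^2+1}\Big)^{3/2}+\frac{c_n}{c_n^2+1},\qquad a_n+b_n=\frac{1-c_n^2}{c_n(1+c_n^2)^{1/2}},$$ with $c_n>0$ for $n=1,\dots,N$.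
   Context: Model. Fix an integer $N\ge1$ and put $\Delta t_N=1/N$. A risky asset has liquidation value $v\sim N(p_0,\Sigma_0)$ with $\Sigma_0>0$. In each period $n=1,\dots,N$ noise traders submit $u_n\sim N(0,\sigma_u^2\Delta t_N)$ ($\sigma_u>0$), i.i.d. and independent of $v$. The insider knows $v$ and submits $x_n=\beta_n(v-p_{n-1})$ with $\beta_n\in\mathbb R$. The market maker observes $y_n=x_n+u_n$ and sets $p_n=E[v\mid y_1,\dots,y_n]$. The insider's profit in period $n$ is $\pi_n=x_n(v-p_n)$ and $\Sigma_n=\operatorname{Var}(v\mid y_1,\dots,y_n)$. For such strategies, with $\lambda_n=\beta_n\Sigma_{n-1}/(\beta_n^2\Sigma_{n-1}+\sigma_u^2\Delta t_N)$ one has $p_n-p_{n-1}=\lambda_ny_n$, $\Sigma_n=\Sigma_{n-1}\sigma_u^2\Delta t_N/(\beta_n^2\Sigma_{n-1}+\sigma_u^2\Delta t_N)$, and $E(\sum_{k=n}^N\pi_k\mid p_1,\dots,p_{n-1},v)=\alpha_{n-1}(v-p_{n-1})^2+\delta_{n-1}$ with $\alpha_N=\delta_N=0$, $\alpha_{n-1}=\alpha_n(1-\lambda_n\beta_n)^2+\beta_n(1-\lambda_n\beta_n)$, $\delta_{n-1}=\delta_n+\alpha_n\lambda_n^2\sigma_u^2\Delta t_N$. Equilibrium. An insider strategy specifies, for each period $n$ and each value $\Sigma_{n-1}>0$ of the current conditional variance, an intensity $\beta_n$. Given the strategy for periods $n+1,\dots,N$, each choice of $\beta_n$ determines (with later intensities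 given by the strategy applied to the resulting variances) $\alpha_{n-1},\delta_{n-1}$ as functions of $\beta_n$ and $\Sigma_{n-1}$. A subgame perfect equilibrium of Model 2 is a strategy such that for every $n$ and every $\Sigma_{n-1}>0$ the prescribed $\beta_n$ maximizes over $\beta_n\in\mathbb R$ the ex ante expected profit $E(\sum_{k=n}^N\pi_k)=\alpha_{n-1}\Sigma_{n-1}+\delta_{n-1}$, with the market maker pricing efficiently given this strategy. *)

theory Defs
  imports Complex_Main
begin

text \<open>Model 2 (risk-neutral insider), N periods, Delta t = 1 / N.
  All quantities are deterministic functions of the conditional variance.\<close>

definition dt :: "nat \<Rightarrow> real" where
  "dt N = 1 / real N"

text \<open>Market maker's efficient pricing coefficient lambda_n, given Sigma_{n-1} = S and beta_n = b.\<close>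
definition lamf :: "real \<Rightarrow> nat \<Rightarrow> real \<Rightarrow> real \<Rightarrow> real" where
  "lamf su N S b = b * S / (b\<^sup>2 * S + su\<^sup>2 * dt N)"

text \<open>Updated conditional variance Sigma_n, given Sigma_{n-1} = S and beta_n = b.\<close>
definition sigf :: "real \<Rightarrow> nat \<Rightarrow> real \<Rightarrow> real \<Rightarrow> real" where
  "sigf su N S b = S * su\<^sup>2 * dt N / (b\<^sup>2 * S + su\<^sup>2 * dt N)"

text \<open>One backward step: given Sigma_{n-1} = S, beta_n = b, and the continuation
  map Sigma_n \<mapsto> (alpha_n, delta_n), return (alpha_{n-1}, delta_{n-1}).\<close>
definition stepv :: "real \<Rightarrow> nat \<Rightarrow> (real \<Rightarrow> real \<times> real) \<Rightarrow> real \<Rightarrow> real \<Rightarrow> real \<times> real" where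
  "stepv su N cont S b =
     (let l = lamf su N S b; S' = sigf su N S b; ad = cont S'
      in (fst ad * (1 - l * b)\<^sup>2 + b * (1 - l * b), snd ad + fst ad * l\<^sup>2 * su\<^sup>2 * dt N))"

text \<open>Given an insider strategy st (st n S = beta_n when Sigma_{n-1} = S),
  AD st su N m S = (alpha_{N-m}, delta_{N-m}) as functions of Sigma_{N-m} = S.\<close>
fun AD :: "(nat \<Rightarrow> real \<Rightarrow> real) \<Rightarrow> real \<Rightarrow> nat \<Rightarrow> nat \<Rightarrow> real \<Rightarrow> real \<times> real" where
  "AD st su N 0 S = (0, 0)"
| "AD st su N (Suc m) S = stepv su N (AD st su N m) S (st (N - m) S)"

text \<open>Ex ante expected profit from period n on, E(sum_{k=n}^N pi_k) = alpha_{n-1} Sigma_{n-1} + delta_{n-1},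
  when Sigma_{n-1} = S, beta_n = b and later periods follow st.\<close>
definition exprofit :: "(nat \<Rightarrow> real \<Rightarrow> real) \<Rightarrow> real \<Rightarrow> nat \<Rightarrow> nat \<Rightarrow> real \<Rightarrow> real \<Rightarrow> real" where
  "exprofit st su N n S b = (let ad = stepv su N (AD st su N (N - n)) S b in fst ad * S + snd ad)"

definition is_SPE :: "(nat \<Rightarrow> real \<Rightarrow> real) \<Rightarrow> real \<Rightarrow> nat \<Rightarrow> bool" where
  "is_SPE st su N \<longleftrightarrow>
     (\<forall>n\<in>{1..N}. \<forall>S>0. \<forall>b::real. exprofit st su N n S b \<le> exprofit st su N n S (st n S))"

end

theory Submission
  imports Defs
begin

definition cfun :: "real \<Rightarrow> real" where
  "cfun K = sqrt (2 / (K^2 + 2 + K * sqrt (K^2 + 8)))"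

lemma cfun_0: "cfun 0 = 1" by (simp add: cfun_def)

lemma cfun_root:
  assumes K: "K \<ge> 0"
  shows "cfun K > 0" and "K = (1 - cfun K ^ 2) / (cfun K * sqrt (1 + cfun K ^ 2))"
proof -
  define r where "r = sqrt (K^2+8)"
  have r0: "r \<ge> 0" by (simp add: r_def)
  have r2: "r^2 = K^2+8" unfolding r_def by (simp add: add_nonneg_nonneg)
  define D where "D = K^2+2+K*r"
  have D2: "D \<ge> 2" using K r0 by (simp add: D_def)
  define y where "y = 2/D"
  have y0: "y > 0" and y1: "y \<le> 1" using D2 by (auto simp: y_def)
  have cy: "cfun K = sqrt y" by (simp add: cfun_def y_def D_def r_def)
  have c2: "(cfun K)^2 = y" using cy y0 by simp
  have key: "(D-2)^2 = 2*K^2*(D+2)"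
  proof -
    have "(D-2)^2 = K^2*(K+r)^2" by (simp add: D_def power2_eq_square algebra_simps)
    also have "(K+r)^2 = 2*(K^2+4+K*r)" using r2 by (simp add: power2_eq_square algebra_simps)
    finally show ?thesis by (simp add: D_def algebra_simps)
  qed
  have quad: "(1-y)^2 = K^2*(y*(1+y))"
  proof -
    have Dn: "D \<noteq> 0" using D2 by simp
    have "(1-y)^2 = (D-2)^2/D^2" using Dn by (simp add: y_def field_simps power2_eq_square)
    also have "\<dots> = K^2*(y*(1+y))" using Dn key by (simp add: y_def field_simps power2_eq_square)
    finally show ?thesis .
  qed
  have pos: "sqrt (y*(1+y)) > 0" using y0 by simp
  have "K * sqrt (y*(1+y)) = sqrt (K^2*(y*(1+y)))" using K by (simp add: real_sqrt_mult)
  also have "\<dots> = 1 - y" using y1 by (simp add: quad[symmetric])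
  finally have e: "K * sqrt (y*(1+y)) = 1 - y" .
  show "cfun K > 0" using cy y0 by simp
  show "K = (1 - cfun K ^ 2) / (cfun K * sqrt (1 + cfun K ^ 2))"
    using e pos c2 cy by (simp add: real_sqrt_mult[symmetric] field_simps)
qed

lemma maxi:
  assumes c: "c > 0" and K: "K = (1 - c^2)/(c*sqrt(1+c^2))"
  shows "K/sqrt(1+x^2) + x/(1+x^2) \<le> K/sqrt(1+c^2) + c/(1+c^2)"
proof -
  define t where "t = 1/sqrt(1+x^2)"
  define u where "u = 1/sqrt(1+c^2)"
  define q where "q = x*t"
  define p where "p = c*u"
  have x1: "1+x^2 > 0" by (simp add: add_pos_nonneg)
  have c1: "1+c^2 > 0" by (simp add: add_pos_nonneg)
  have t0: "t > 0" using x1 by (simp add: t_def)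
  have u0: "u > 0" using c1 by (simp add: u_def)
  have p0: "p > 0" using c u0 by (simp add: p_def)
  have tt: "t^2 = 1/(1+x^2)" using x1 by (simp add: t_def power_divide)
  have uu: "u^2 = 1/(1+c^2)" using c1 by (simp add: u_def power_divide)
  have h1: "t^2+q^2 = 1" using tt x1 by (simp add: q_def power_mult_distrib field_simps)
  have h2: "u^2+p^2 = 1" using uu c1 by (simp add: p_def power_mult_distrib field_simps)
  have Kp: "K*p = u^2 - p^2"
  proof -
    have "K*p = (1-c^2)/(sqrt(1+c^2)*sqrt(1+c^2))" using c by (simp add: K p_def u_def)
    also have "\<dots> = (1-c^2)/(1+c^2)" using c1 by simp
    also have "\<dots> = u^2 - p^2" using uu c1 by (simp add: p_def power_mult_distrib field_simps)
    finally show ?thesis .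
  qed
  have fx: "K/sqrt(1+x^2) + x/(1+x^2) = K*t + q*t"
    using tt by (simp add: t_def q_def power2_eq_square divide_inverse mult.assoc)
  have fc: "K/sqrt(1+c^2) + c/(1+c^2) = K*u + p*u"
    using uu by (simp add: u_def p_def power2_eq_square divide_inverse mult.assoc)
  have id: "p*((K*u+p*u) - (K*t+q*t)) = t*((t-u)^2+(q-p)^2)/2 + u*(t-u)^2"
  proof -
    have "p*((K*u+p*u) - (K*t+q*t)) = (K*p)*u + p^2*u - (K*p)*t - p*q*t"
      by (simp add: algebra_simps power2_eq_square)
    also have "\<dots> = (u^2-p^2)*u + p^2*u - (u^2-p^2)*t - p*q*t" by (simp add: Kp)
    also have "\<dots> = t*((t-u)^2+(q-p)^2)/2 + u*(t-u)^2" using h1 h2 by algebra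
    finally show ?thesis .
  qed
  have "t*((t-u)^2+(q-p)^2)/2 + u*(t-u)^2 \<ge> 0" using t0 u0 by simp
  hence "p*((K*u+p*u) - (K*t+q*t)) \<ge> 0" using id by simp
  hence "(K*u+p*u) - (K*t+q*t) \<ge> 0" using p0 by (simp add: zero_le_mult_iff)
  thus ?thesis using fx fc by simp
qed

lemma step_formula:
  assumes s: "s = su * sqrt (dt N)" and s0: "s > 0" and S: "S > 0" and dt0: "dt N \<ge> 0"
    and cont: "\<forall>S'>0. cont S' = (B*s/sqrt S', A*s*sqrt S')"
  shows "stepv su N cont S (c*s/sqrt S) =
    ((B/sqrt(1+c^2)^3 + c/(1+c^2))*s/sqrt S, (A/sqrt(1+c^2) + B*c^2/sqrt(1+c^2)^3)*s*sqrt S)"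
proof -
  define r where "r = sqrt(1+c^2)"
  define x where "x = sqrt S"
  have c1: "1+c^2 > 0" by (simp add: add_pos_nonneg)
  have r0: "r > 0" using c1 by (simp add: r_def)
  have r2: "r^2 = 1+c^2" using c1 by (simp add: r_def)
  have x0: "x > 0" using S by (simp add: x_def)
  have Sx: "S = x^2" using S by (simp add: x_def)
  have k: "su^2 * dt N = s^2" using dt0 by (simp add: s power_mult_distrib)
  have den: "(c*s/x)^2 * S + su^2*dt N = s^2*r^2"
  proof -
    have "(c*s/x)^2 * S = c^2*s^2" using x0 Sx by (simp add: power_divide power_mult_distrib)
    thus ?thesis using k by (simp add: r2 algebra_simps)
  qed
  have lam: "lamf su N S (c*s/x) = c*x/(s*r^2)"
    unfolding lamf_def den using x0 s0 r0 by (simp add: Sx field_simps power2_eq_square)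
  have sig: "sigf su N S (c*s/x) = S/r^2"
  proof -
    have "sigf su N S (c*s/x) = S * (su^2 * dt N) / (s^2*r^2)"
      unfolding sigf_def den by (simp add: mult.assoc)
    thus ?thesis using s0 by (simp add: k)
  qed
  have sq: "sqrt (S/r^2) = x/r" using r0 by (simp add: x_def real_sqrt_divide)
  have cS: "cont (S/r^2) = (B*s*r/x, A*s*x/r)" using cont S r0 sq by simp
  have one: "1 - c*x/(s*r^2) * (c*s/x) = 1/r^2"
  proof -
    have "c*x/(s*r^2) * (c*s/x) = c^2/r^2" using x0 s0 by (simp add: field_simps power2_eq_square)
    moreover have "1 - c^2/r^2 = 1/r^2" using c1 r2 by (simp add: field_simps)
    ultimately show ?thesis by simp
  qed
  have "stepv su N cont S (c*s/x) =
     ((B*s*r/x) * (1/r^2)^2 + (c*s/x) * (1/r^2),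
      A*s*x/r + (B*s*r/x) * (c*x/(s*r^2))^2 * (su^2 * dt N))"
    unfolding stepv_def Let_def lam sig cS one by (simp add: mult.assoc)
  also have "\<dots> = ((B*s*r/x) * (1/r^2)^2 + (c*s/x) * (1/r^2),
      A*s*x/r + (B*s*r/x) * (c*x/(s*r^2))^2 * s^2)" by (simp only: k)
  also have "\<dots> = ((B/r^3 + c/r^2)*s/x, (A/r + B*c^2/r^3)*s*x)"
    using x0 s0 r0 by (simp add: field_simps power2_eq_square power3_eq_cube)
  finally show ?thesis using r2 by (simp add: r_def x_def)
qed

fun AB :: "nat \<Rightarrow> real \<times> real" where
  "AB 0 = (0, 0)"
| "AB (Suc m) = (let a = fst (AB m); b = snd (AB m); c = cfun (a + b) in
     (a * sqrt (1 / (c ^ 2 + 1)) + b * sqrt (1 / (c ^ 2 + 1)) ^ 3 * c ^ 2,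
      b * sqrt (1 / (c ^ 2 + 1)) ^ 3 + c / (c ^ 2 + 1)))"

definition cc :: "nat \<Rightarrow> real" where
  "cc m = cfun (fst (AB m) + snd (AB m))"

definition stS :: "real \<Rightarrow> nat \<Rightarrow> nat \<Rightarrow> real \<Rightarrow> real" where
  "stS su N n S = cc (N - n) * su * sqrt (dt N) / sqrt S"

fun SigF :: "(nat \<Rightarrow> real \<Rightarrow> real) \<Rightarrow> real \<Rightarrow> nat \<Rightarrow> real \<Rightarrow> nat \<Rightarrow> real" where
  "SigF st su N S0 0 = S0"
| "SigF st su N S0 (Suc n) = sigf su N (SigF st su N S0 n) (st (Suc n) (SigF st su N S0 n))"

lemma sqrt_inv: "sqrt (1 / (c ^ 2 + 1)) = 1 / sqrt (1 + c^2)"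
  by (simp add: real_sqrt_divide add.commute)

lemma AB_rec: "AB (Suc m) = (let a = fst (AB m); b = snd (AB m); c = cc m; r = sqrt (1 + c^2) in
     (a / r + b * c^2 / r^3, b / r^3 + c / (1 + c^2)))"
  unfolding AB.simps Let_def cc_def sqrt_inv by (simp add: power_one_over)

lemma K_nonneg: "fst (AB m) + snd (AB m) \<ge> 0"
proof (induction m)
  case 0 then show ?case by simp
next
  case (Suc m)
  define a where "a = fst (AB m)"
  define b where "b = snd (AB m)"
  define c where "c = cc m"
  define r where "r = sqrt (1 + c^2)"
  have c0: "c > 0" using cfun_root(1)[OF Suc.IH] by (simp add: c_def cc_def)
  have c1: "1+c^2 > 0" by (simp add: add_pos_nonneg)
  have r0: "r > 0" using c1 by (simp add: r_def)
  have r2: "r^2 = 1+c^2" using c1 by (simp add: r_def)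
  have "fst (AB (Suc m)) + snd (AB (Suc m)) = a / r + b * c^2 / r^3 + (b / r^3 + c / (1 + c^2))"
    by (simp only: AB_rec Let_def a_def b_def c_def r_def fst_conv snd_conv)
  also have "\<dots> = (a+b)/r + c/(1+c^2)"
  proof -
    have "b * c^2 / r^3 + b / r^3 = b*(1+c^2)/r^3" by (simp add: ring_distribs add_divide_distrib)
    also have "\<dots> = b*r^2/r^3" by (simp add: r2)
    also have "\<dots> = b / r" using r0 by (simp add: power2_eq_square power3_eq_cube)
    finally have "b * c^2 / r^3 + b / r^3 = b / r" .
    thus ?thesis by (simp add: add_divide_distrib algebra_simps)
  qed
  also have "\<dots> \<ge> 0" using Suc.IH r0 c0 c1 by (simp add: a_def b_def)
  finally show ?case .
qed

lemma cc_pos: "cc m > 0"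
  using cfun_root(1)[OF K_nonneg] by (simp add: cc_def)

lemma AD_scale:
  assumes s: "s = su * sqrt (dt N)" and s0: "s > 0" and dt0: "dt N \<ge> 0"
  shows "m \<le> N \<Longrightarrow> S > 0 \<Longrightarrow>
    AD (stS su N) su N m S = (snd (AB m) * s / sqrt S, fst (AB m) * s * sqrt S)"
proof (induction m arbitrary: S)
  case 0 then show ?case by simp
next
  case (Suc m)
  have IH: "\<forall>S'>0. AD (stS su N) su N m S' = (snd (AB m) * s / sqrt S', fst (AB m) * s * sqrt S')"
    using Suc by simp
  have st: "stS su N (N - m) S = cc m * s / sqrt S"
    using Suc.prems by (simp add: stS_def s mult.assoc)
  have "AD (stS su N) su N (Suc m) S = stepv su N (AD (stS su N) su N m) S (cc m * s / sqrt S)"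
    by (simp add: st)
  also have "\<dots> = ((snd (AB m)/sqrt(1+cc m^2)^3 + cc m/(1+cc m^2))*s/sqrt S,
       (fst (AB m)/sqrt(1+cc m^2) + snd (AB m)*cc m^2/sqrt(1+cc m^2)^3)*s*sqrt S)"
    by (rule step_formula[OF s s0 Suc.prems(2) dt0 IH])
  also have "\<dots> = (snd (AB (Suc m)) * s / sqrt S, fst (AB (Suc m)) * s * sqrt S)"
    by (simp only: AB_rec Let_def fst_conv snd_conv)
  finally show ?case .
qed

lemma profit:
  assumes s: "s = su * sqrt (dt N)" and s0: "s > 0" and S: "S > 0" and dt0: "dt N \<ge> 0"
    and cont: "\<forall>S'>0. cont S' = (B*s/sqrt S', A*s*sqrt S')"
  shows "(let ad = stepv su N cont S (c*s/sqrt S) in fst ad * S + snd ad) =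
     s * sqrt S * ((A+B)/sqrt(1+c^2) + c/(1+c^2))"
proof -
  define r where "r = sqrt(1+c^2)"
  define x where "x = sqrt S"
  have c1: "1+c^2 > 0" by (simp add: add_pos_nonneg)
  have r0: "r > 0" using c1 by (simp add: r_def)
  have r2: "r^2 = 1+c^2" using c1 by (simp add: r_def)
  have x0: "x > 0" using S by (simp add: x_def)
  have Sx: "S = x^2" using S by (simp add: x_def)
  have "(let ad = stepv su N cont S (c*s/sqrt S) in fst ad * S + snd ad) =
     (B/r^3 + c/r^2)*s/x * S + (A/r + B*c^2/r^3)*s*x"
    using step_formula[OF s s0 S dt0 cont, of c] r2 by (simp add: Let_def r_def x_def)
  also have "\<dots> = (B/r^3 + c/r^2)*s/x * x^2 + (A/r + B*c^2/r^3)*s*x" using Sx by simp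
  also have "\<dots> = s * x * ((A+B)/r + c/r^2) + s*x*B*(1 + c^2 - r^2)/r^3"
    using x0 r0 by (simp add: field_simps power2_eq_square power3_eq_cube)
  also have "\<dots> = s * x * ((A+B)/r + c/r^2)" using r2 by simp
  finally show ?thesis using r2 by (simp add: r_def x_def)
qed

lemma sigf_pos: "S > 0 \<Longrightarrow> su > 0 \<Longrightarrow> dt N > 0 \<Longrightarrow> sigf su N S b > 0"
  unfolding sigf_def by (intro divide_pos_pos mult_pos_pos add_nonneg_pos) auto

theorem theorem3:
  fixes N :: nat and su S0 :: real
  assumes "N \<ge> 1" and "su > 0" and "S0 > 0"
  shows "\<exists>st. is_SPE st su N \<and>
    (\<exists>(a::nat \<Rightarrow> real) (b::nat \<Rightarrow> real) (c::nat \<Rightarrow> real)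
       (beta::nat \<Rightarrow> real) (lam::nat \<Rightarrow> real) (alpha::nat \<Rightarrow> real) (delta::nat \<Rightarrow> real) (Sigma::nat \<Rightarrow> real).
       Sigma 0 = S0 \<and>
       (\<forall>n\<in>{1..N}. beta n = st n (Sigma (n - 1)) \<and>
                    lam n = lamf su N (Sigma (n - 1)) (beta n) \<and>
                    Sigma n = sigf su N (Sigma (n - 1)) (beta n)) \<and>
       (\<forall>n\<le>N. (alpha n, delta n) = AD st su N (N - n) (Sigma n)) \<and>
       (\<forall>n\<in>{0..N-1}. delta n = a n * su * sqrt (dt N) * sqrt (Sigma n) \<and>
                      alpha n = b n * su * sqrt (dt N) / sqrt (Sigma n)) \<and>
       (\<forall>n\<in>{1..N}. beta n = c n * su * sqrt (dt N) / sqrt (Sigma (n - 1))) \<and>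
       a (N - 1) = 0 \<and> b (N - 1) = 1 / 2 \<and> c N = 1 \<and>
       (\<forall>n\<in>{1..N-1}.
          a (n - 1) = a n * sqrt (1 / (c n ^ 2 + 1)) + b n * sqrt (1 / (c n ^ 2 + 1)) ^ 3 * c n ^ 2 \<and>
          b (n - 1) = b n * sqrt (1 / (c n ^ 2 + 1)) ^ 3 + c n / (c n ^ 2 + 1) \<and>
          a n + b n = (1 - c n ^ 2) / (c n * sqrt (1 + c n ^ 2))) \<and>
       (\<forall>n\<in>{1..N}. c n > 0))"
proof -
  define s where "s = su * sqrt (dt N)"
  have dtpos: "dt N > 0" using assms by (simp add: dt_def)
  have s0: "s > 0" using assms dtpos by (simp add: s_def)
  have dt0: "dt N \<ge> 0" using dtpos by simp
  define st where "st = stS su N"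
  have scale: "\<And>m S. m \<le> N \<Longrightarrow> S > 0 \<Longrightarrow>
      AD st su N m S = (snd (AB m) * s / sqrt S, fst (AB m) * s * sqrt S)"
    unfolding st_def by (rule AD_scale[OF s_def s0 dt0])
  have spe: "is_SPE st su N"
    unfolding is_SPE_def
  proof (intro ballI allI impI)
    fix n S b assume n: "n \<in> {1..N}" and S: "(S::real) > 0"
    define m where "m = N - n"
    have mN: "m \<le> N" by (simp add: m_def)
    have cont: "\<forall>S'>0. AD st su N m S' = (snd (AB m)*s/sqrt S', fst (AB m)*s*sqrt S')"
      using scale mN by simp
    define K where "K = fst (AB m) + snd (AB m)"
    have K0: "K \<ge> 0" by (simp add: K_def K_nonneg)
    define x where "x = b * sqrt S / s"
    have bx: "b = x * s / sqrt S" using s0 S by (simp add: x_def)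
    have stn: "st n S = cc m * s / sqrt S" by (simp add: st_def stS_def m_def s_def mult.assoc)
    have "exprofit st su N n S b = s * sqrt S * (K/sqrt(1+x^2) + x/(1+x^2))"
      unfolding exprofit_def m_def[symmetric] bx profit[OF s_def s0 S dt0 cont] K_def
      by (simp add: add.commute)
    also have "\<dots> \<le> s * sqrt S * (K/sqrt(1+cc m^2) + cc m/(1+cc m^2))"
      using maxi[OF cfun_root[OF K0], of x] s0 S by (simp add: cc_def K_def)
    also have "\<dots> = exprofit st su N n S (st n S)"
      unfolding exprofit_def m_def[symmetric] stn profit[OF s_def s0 S dt0 cont] K_def
      by (simp add: add.commute)
    finally show "exprofit st su N n S b \<le> exprofit st su N n S (st n S)" .
  qed
  define Sig where "Sig = SigF st su N S0"
  have Sig0: "\<And>n. Sig n > 0"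
  proof -
    fix n show "Sig n > 0"
      by (induction n) (auto simp: Sig_def assms intro!: sigf_pos dtpos)
  qed
  show ?thesis
  proof (intro exI[of _ st] conjI spe)
    show "\<exists>(a::nat \<Rightarrow> real) (b::nat \<Rightarrow> real) (c::nat \<Rightarrow> real)
       (beta::nat \<Rightarrow> real) (lam::nat \<Rightarrow> real) (alpha::nat \<Rightarrow> real) (delta::nat \<Rightarrow> real) (Sigma::nat \<Rightarrow> real).
       Sigma 0 = S0 \<and>
       (\<forall>n\<in>{1..N}. beta n = st n (Sigma (n - 1)) \<and>
                    lam n = lamf su N (Sigma (n - 1)) (beta n) \<and>
                    Sigma n = sigf su N (Sigma (n - 1)) (beta n)) \<and>
       (\<forall>n\<le>N. (alpha n, delta n) = AD st su N (N - n) (Sigma n)) \<and>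
       (\<forall>n\<in>{0..N-1}. delta n = a n * su * sqrt (dt N) * sqrt (Sigma n) \<and>
                      alpha n = b n * su * sqrt (dt N) / sqrt (Sigma n)) \<and>
       (\<forall>n\<in>{1..N}. beta n = c n * su * sqrt (dt N) / sqrt (Sigma (n - 1))) \<and>
       a (N - 1) = 0 \<and> b (N - 1) = 1 / 2 \<and> c N = 1 \<and>
       (\<forall>n\<in>{1..N-1}.
          a (n - 1) = a n * sqrt (1 / (c n ^ 2 + 1)) + b n * sqrt (1 / (c n ^ 2 + 1)) ^ 3 * c n ^ 2 \<and>
          b (n - 1) = b n * sqrt (1 / (c n ^ 2 + 1)) ^ 3 + c n / (c n ^ 2 + 1) \<and>
          a n + b n = (1 - c n ^ 2) / (c n * sqrt (1 + c n ^ 2))) \<and>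
       (\<forall>n\<in>{1..N}. c n > 0)"
    proof (intro exI conjI)
      show "Sig 0 = S0" by (simp add: Sig_def)
      show "\<forall>n\<in>{1..N}. st n (Sig (n-1)) = st n (Sig (n - 1)) \<and>
          lamf su N (Sig (n-1)) (st n (Sig (n-1))) = lamf su N (Sig (n - 1)) (st n (Sig (n-1))) \<and>
          Sig n = sigf su N (Sig (n - 1)) (st n (Sig (n-1)))"
      proof
        fix n assume "n \<in> {1..N}"
        then obtain k where k: "n = Suc k" by (cases n) auto
        show "st n (Sig (n-1)) = st n (Sig (n - 1)) \<and>
          lamf su N (Sig (n-1)) (st n (Sig (n-1))) = lamf su N (Sig (n - 1)) (st n (Sig (n-1))) \<and>
          Sig n = sigf su N (Sig (n - 1)) (st n (Sig (n-1)))"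
          by (simp add: k Sig_def)
      qed
      show "\<forall>n\<le>N. (fst (AD st su N (N - n) (Sig n)), snd (AD st su N (N - n) (Sig n)))
               = AD st su N (N - n) (Sig n)" by simp
      show "\<forall>n\<in>{0..N-1}. snd (AD st su N (N - n) (Sig n)) = fst (AB (N-n)) * su * sqrt (dt N) * sqrt (Sig n) \<and>
                      fst (AD st su N (N - n) (Sig n)) = snd (AB (N-n)) * su * sqrt (dt N) / sqrt (Sig n)"
        using scale Sig0 by (simp add: s_def mult.assoc)
      show "\<forall>n\<in>{1..N}. st n (Sig (n-1)) = cc (N-n) * su * sqrt (dt N) / sqrt (Sig (n - 1))"
        by (simp add: st_def stS_def)
      have N1: "N - (N - 1) = Suc 0" using assms by simp
      show "fst (AB (N - (N - 1))) = 0" unfolding N1 by (simp add: cfun_0)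
      show "snd (AB (N - (N - 1))) = 1/2" unfolding N1 by (simp add: cfun_0)
      show "cc (N - N) = 1" by (simp add: cc_def cfun_0)
      show "\<forall>n\<in>{1..N}. cc (N - n) > 0" by (simp add: cc_pos)
      show "\<forall>n\<in>{1..N-1}.
          fst (AB (N - (n - 1))) = fst (AB (N-n)) * sqrt (1 / (cc (N-n) ^ 2 + 1)) + snd (AB (N-n)) * sqrt (1 / (cc (N-n) ^ 2 + 1)) ^ 3 * cc (N-n) ^ 2 \<and>
          snd (AB (N - (n - 1))) = snd (AB (N-n)) * sqrt (1 / (cc (N-n) ^ 2 + 1)) ^ 3 + cc (N-n) / (cc (N-n) ^ 2 + 1) \<and>
          fst (AB (N-n)) + snd (AB (N-n)) = (1 - cc (N-n) ^ 2) / (cc (N-n) * sqrt (1 + cc (N-n) ^ 2))"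
      proof
        fix n assume n: "n \<in> {1..N-1}"
        have e: "N - (n - 1) = Suc (N - n)" using n by auto
        show "fst (AB (N - (n - 1))) = fst (AB (N-n)) * sqrt (1 / (cc (N-n) ^ 2 + 1)) + snd (AB (N-n)) * sqrt (1 / (cc (N-n) ^ 2 + 1)) ^ 3 * cc (N-n) ^ 2 \<and>
          snd (AB (N - (n - 1))) = snd (AB (N-n)) * sqrt (1 / (cc (N-n) ^ 2 + 1)) ^ 3 + cc (N-n) / (cc (N-n) ^ 2 + 1) \<and>
          fst (AB (N-n)) + snd (AB (N-n)) = (1 - cc (N-n) ^ 2) / (cc (N-n) * sqrt (1 + cc (N-n) ^ 2))"
          unfolding e using cfun_root(2)[OF K_nonneg[of "N-n"]]
          by (simp add: cc_def Let_def)
      qed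
    qed
  qed
qed

end
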